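(* For every integer $n\geq 2$, $$\frac{3}{2}\,WS(n-1) + 1 \leq WS^+(n) \leq WS(n).$$
   Context: A set $A \subseteq \mathbb{N}$ is sum-free if for all $(a,b)\in A^2$ (allowing $a=b$), $a+b \notin A$; it is weakly sum-free if for all $(a,b)\in A^2$ with $a\neq b$, $a+b\notin A$. $WS(n)$ is the largest $p$ such that $\{1,\dots,p\}$ can be partitioned into $n$ weakly sum-free subsets. For positive integers $a>b$, let $\pi(x) = (x \bmod a) + a\cdot \mathbb{1}_{\{0,\dots,b\}}(x \bmod a)$. For positive integers $a,n,b$ with $a>b$, a partition $(A_1,\dots,A_n)$ of $\{1,\dots,a+b\}$ is a $b$-WS-template with width $a$ and $n$ colors if: (i) every $A_i$ is weakly sum-free; (ii) every $A_i\setminus\{1,\dots,b\}$ is sum-free; (iii) for all $(x,y)\in A_n^2$, $x+y>b+2a$ implies $x+y-2a\notin A_n$; (iv) for all $i\in\{1,\dots,n-1\}$ and $(x,y)\in A_i^2$, $x+y>a+b$ implies $\pi(x+y)\notin A_i$. $WS^+_b(n)$ is the largest $a$ such that a $b$-WS-template with width $a$ and $n$ colors exists ($0$ if none), and $WS^+(n)=\max_{b\in\mathbb{N}^*} WS^+_b(n)$. *)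

theory Defs
  imports Complex_Main
begin

definition sum_free :: "nat set \<Rightarrow> bool" where
  "sum_free A \<longleftrightarrow> (\<forall>a\<in>A. \<forall>b\<in>A. a + b \<notin> A)"

definition weakly_sum_free :: "nat set \<Rightarrow> bool" where
  "weakly_sum_free A \<longleftrightarrow> (\<forall>a\<in>A. \<forall>b\<in>A. a \<noteq> b \<longrightarrow> a + b \<notin> A)"

definition is_partition :: "(nat \<Rightarrow> nat set) \<Rightarrow> nat \<Rightarrow> nat set \<Rightarrow> bool" where
  "is_partition A n S \<longleftrightarrow>
     (\<Union>i\<in>{1..n}. A i) = S \<and>
     (\<forall>i\<in>{1..n}. \<forall>j\<in>{1..n}. i \<noteq> j \<longrightarrow> A i \<inter> A j = {})"

definition WS :: "nat \<Rightarrow> nat" where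
  "WS n = (GREATEST p. \<exists>A. is_partition A n {1..p} \<and> (\<forall>i\<in>{1..n}. weakly_sum_free (A i)))"

definition pi_map :: "nat \<Rightarrow> nat \<Rightarrow> nat \<Rightarrow> nat" where
  "pi_map a b x = x mod a + (if x mod a \<in> {0..b} then a else 0)"

definition WS_template :: "nat \<Rightarrow> nat \<Rightarrow> nat \<Rightarrow> (nat \<Rightarrow> nat set) \<Rightarrow> bool" where
  "WS_template b a n A \<longleftrightarrow>
     0 < b \<and> b < a \<and> 0 < n \<and>
     is_partition A n {1..a + b} \<and>
     (\<forall>i\<in>{1..n}. weakly_sum_free (A i)) \<and>
     (\<forall>i\<in>{1..n}. sum_free (A i - {1..b})) \<and>
     (\<forall>x\<in>A n. \<forall>y\<in>A n. x + y > b + 2 * a \<longrightarrow> x + y - 2 * a \<notin> A n) \<and>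
     (\<forall>i\<in>{1..n - 1}. \<forall>x\<in>A i. \<forall>y\<in>A i. x + y > a + b \<longrightarrow> pi_map a b (x + y) \<notin> A i)"

definition WS_plus_b :: "nat \<Rightarrow> nat \<Rightarrow> nat" where
  "WS_plus_b b n = (if \<exists>a A. WS_template b a n A
                    then (GREATEST a. \<exists>A. WS_template b a n A) else 0)"

definition WS_plus :: "nat \<Rightarrow> nat" where
  "WS_plus n = (SUP b\<in>{b. 0 < b}. WS_plus_b b n)"

end

theory Submission
  imports Defs "HOL-Library.Ramsey"
begin


lemma part_the:
  assumes "is_partition A n S" "d \<in> S"
  shows "(THE i. i \<in> {1..n} \<and> d \<in> A i) \<in> {1..n} \<and> d \<in> A (THE i. i \<in> {1..n} \<and> d \<in> A i)"
proof -
  have "\<exists>!i. i \<in> {1..n} \<and> d \<in> A i"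
    using assms unfolding is_partition_def by blast
  from theI'[OF this] show ?thesis .
qed

lemma part_the_eq:
  assumes "is_partition A n S" "i \<in> {1..n}" "d \<in> A i"
  shows "(THE i. i \<in> {1..n} \<and> d \<in> A i) = i"
proof -
  have "\<exists>!i. i \<in> {1..n} \<and> d \<in> A i"
    using assms unfolding is_partition_def by blast
  then show ?thesis using assms(2,3) by (metis (mono_tags, lifting) the1_equality)
qed

lemma wsf_bound:
  "\<exists>N::nat. \<forall>p A. is_partition A n {1..p} \<and> (\<forall>i\<in>{1..n}. weakly_sum_free (A i)) \<longrightarrow> p < N"
proof -
  obtain N :: nat where N: "partn_lst {..<N} (replicate n 4) 2"
    using ramsey_full by blast
  have "p < N" if P: "is_partition A n {1..p}" and W: "\<forall>i\<in>{1..n}. weakly_sum_free (A i)" for p A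
  proof (rule ccontr)
    assume "\<not> p < N"
    hence pN: "N \<le> p" by simp
    define col where "col d = (THE i. i \<in> {1..n} \<and> d \<in> A i)" for d
    have colp: "col d \<in> {1..n} \<and> d \<in> A (col d)" if "d \<in> {1..p}" for d
      using part_the[OF P that] unfolding col_def by blast
    define f where "f e = col (Max e - Min e) - 1" for e :: "nat set"
    have fpair: "f {x, y} = col (y - x) - 1" if "x < y" for x y
      using that unfolding f_def by (simp add: max_def min_def)
    have "f \<in> nsets {..<N} 2 \<rightarrow> {..<length (replicate n 4)}"
    proof
      fix e assume "e \<in> nsets {..<N} 2"
      then obtain x y where e: "e = {x, y}" "x < y" "y < N"
        using ordered_nsets_2_eq[of "{..<N}"] by auto
      then have "y - x \<in> {1..p}" using pN by auto
      then show "f e \<in> {..<length (replicate n 4)}"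
        using colp[of "y - x"] fpair[OF e(2)] e(1) by auto
    qed
    then obtain i H where i: "i < n" and H: "H \<in> nsets {..<N} 4" and Hi: "f ` nsets H 2 \<subseteq> {i}"
      using partn_lstE[OF N, of f n] by auto
    obtain u x y z where H': "H = {u,x,y,z}" "u < x" "x < y" "y < z" "z < N"
      using H ordered_nsets_4_eq[of "{..<N}"] by auto
    have mono: "b - a' \<in> A (Suc i)" if "a' \<in> H" "b \<in> H" "a' < b" for a' b
    proof -
      have "{a', b} \<in> nsets H 2" using that by auto
      then have "f {a', b} = i" using Hi by blast
      moreover have bp: "b - a' \<in> {1..p}" using that H' pN by auto
      ultimately have "col (b - a') - 1 = i" using fpair[OF that(3)] by simp
      moreover have "col (b - a') \<ge> 1" using colp[OF bp] by simp
      ultimately have "col (b - a') = Suc i" by simp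
      then show ?thesis using colp[OF bp] by metis
    qed
    have ws: "weakly_sum_free (A (Suc i))" using W i by auto
    have d1: "x - u \<in> A (Suc i)" "y - x \<in> A (Suc i)" "z - y \<in> A (Suc i)"
      "y - u \<in> A (Suc i)" "z - x \<in> A (Suc i)" "z - u \<in> A (Suc i)"
      using mono H' by auto
    show False
    proof (cases "x - u = y - x")
      case False
      moreover have "(x - u) + (y - x) = y - u" using H' by auto
      ultimately show ?thesis using ws d1 unfolding weakly_sum_free_def by metis
    next
      case eq1: True
      show ?thesis
      proof (cases "y - x = z - y")
        case False
        moreover have "(y - x) + (z - y) = z - x" using H' by auto
        ultimately show ?thesis using ws d1 unfolding weakly_sum_free_def by metis
      next
        case True
        have "x - u \<noteq> z - x" using eq1 True H' by auto
        moreover have "(x - u) + (z - x) = z - u" using H' by auto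
        ultimately show ?thesis using ws d1 unfolding weakly_sum_free_def by metis
      qed
    qed
  qed
  then show ?thesis by blast
qed



definition WSP :: "nat \<Rightarrow> nat \<Rightarrow> bool" where
  "WSP n p \<longleftrightarrow> (\<exists>A. is_partition A n {1..p} \<and> (\<forall>i\<in>{1..n}. weakly_sum_free (A i)))"

lemma WSP0: "WSP n 0"
  unfolding WSP_def is_partition_def weakly_sum_free_def
  by (rule exI[of _ "\<lambda>_. {}"]) auto

lemma WS_props: "WSP n (WS n)" "WSP n p \<Longrightarrow> p \<le> WS n"
proof -
  obtain N where N: "\<And>p. WSP n p \<Longrightarrow> p < N"
    using wsf_bound[of n] unfolding WSP_def by blast
  have eq: "WS n = Greatest (WSP n)" unfolding WS_def WSP_def by simp
  show "WSP n (WS n)" unfolding eq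
    by (rule GreatestI_nat[of _ 0 N]) (use WSP0 N less_imp_le in auto)
  show "WSP n p \<Longrightarrow> p \<le> WS n" unfolding eq
    by (rule Greatest_le_nat[of _ p N]) (use N less_imp_le in auto)
qed

lemma template_le: "WS_template b a n A \<Longrightarrow> a + b \<le> WS n"
  by (rule WS_props(2)) (auto simp: WSP_def WS_template_def)

lemma WS_plus_b_le: "WS_plus_b b n \<le> WS n"
proof (cases "\<exists>a A. WS_template b a n A")
  case True
  then obtain a0 A0 where a0: "WS_template b a0 n A0" by blast
  have "\<exists>A. WS_template b (GREATEST a. \<exists>A. WS_template b a n A) n A"
    by (rule GreatestI_nat[of _ a0 "WS n"]) (use a0 template_le in fastforce)+
  then have "(GREATEST a. \<exists>A. WS_template b a n A) \<le> WS n"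
    using template_le by fastforce
  then show ?thesis using True unfolding WS_plus_b_def by simp
next
  case False
  then show ?thesis unfolding WS_plus_b_def by auto
qed

lemma template_le_plus_b: "WS_template b a n A \<Longrightarrow> a \<le> WS_plus_b b n"
proof -
  assume a: "WS_template b a n A"
  have "a \<le> (GREATEST a. \<exists>A. WS_template b a n A)"
    by (rule Greatest_le_nat[of _ a "WS n"]) (use a template_le in fastforce)+
  then show ?thesis using a unfolding WS_plus_b_def by auto
qed

lemma WS_plus_le: "WS_plus n \<le> WS n"
  unfolding WS_plus_def
  by (rule cSUP_least) (auto simp: WS_plus_b_le intro: exI[of _ 1])

lemma plus_b_le_plus: "0 < b \<Longrightarrow> WS_plus_b b n \<le> WS_plus n"
  unfolding WS_plus_def
  by (rule cSUP_upper) (auto intro!: bdd_aboveI2[where M="WS n"] WS_plus_b_le)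



lemma pi_lemma:
  assumes "p < t" "t \<le> 2 * p" "p < a"
  shows "pi_map a p (t + k * a) = t"
proof -
  have m: "(t + k * a) mod a = t mod a" by simp
  show ?thesis
  proof (cases "t < a")
    case True
    then show ?thesis using assms unfolding pi_map_def m by auto
  next
    case False
    then have "t mod a = t - a" using assms
      using le_mod_geq[of a t] mod_less[of "t - a" a] by auto
    then show ?thesis using assms False unfolding pi_map_def m by auto
  qed
qed

lemma construct:
  assumes n2: "n \<ge> 2" and P: "is_partition B (n - 1) {1..p}"
    and W: "\<forall>i\<in>{1..n-1}. weakly_sum_free (B i)" and p1: "p \<ge> 1"
    and a_def: "a = p + 1 + (p + 1) div 2"
    and A_def: "A = (\<lambda>i. if i = n then {p+1..2*p+1} else B i \<union> {x. 2*p+2 \<le> x \<and> x - a \<in> B i})"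
  shows "WS_template p a n A"
proof -
  have a1: "p < a" "a \<le> 2*p+1" "3*p+2 \<le> 2*a" "2*a \<le> 3*p+3" using a_def by auto
  have U: "(\<Union>i\<in>{1..n-1}. B i) = {1..p}"
    using P unfolding is_partition_def by (rule conjunct1)
  have D: "\<forall>i\<in>{1..n-1}. \<forall>j\<in>{1..n-1}. i \<noteq> j \<longrightarrow> B i \<inter> B j = {}"
    using P unfolding is_partition_def by (rule conjunct2)
  have Bsub: "1 \<le> x \<and> x \<le> p" if "i \<in> {1..n-1}" "x \<in> B i" for i x
  proof -
    have "x \<in> (\<Union>i\<in>{1..n-1}. B i)" using that by (rule UN_I)
    then have "x \<in> {1..p}" by (simp only: U)
    then show ?thesis by simp
  qed
  have Bdisj: "False" if "i \<in> {1..n-1}" "j \<in> {1..n-1}" "i \<noteq> j" "x \<in> B i" "x \<in> B j" for i j x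
  proof -
    have "B i \<inter> B j = {}" using D that(1,2,3) by blast
    then show False using that(4,5) by blast
  qed
  have Bcov: "\<exists>i\<in>{1..n-1}. x \<in> B i" if "1 \<le> x" "x \<le> p" for x
  proof -
    have "x \<in> (\<Union>i\<in>{1..n-1}. B i)" using U that by simp
    then show ?thesis by blast
  qed
  have memi: "x \<in> A i \<longleftrightarrow> x \<in> B i \<or> (2*p+2 \<le> x \<and> x - a \<in> B i)" if "i \<noteq> n" for i x
    using that unfolding A_def by auto
  have memn: "A n = {p+1..2*p+1}" unfolding A_def by simp
  have notmid: "x \<notin> A i" if "i \<in> {1..n-1}" "p < x" "x < 2*p+2" for i x
    using that memi[of i x] Bsub[of i x] n2 by auto
  have part: "is_partition A n {1..a + p}"
    unfolding is_partition_def
  proof (intro conjI ballI impI)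
    show "(\<Union>i\<in>{1..n}. A i) = {1..a + p}"
    proof
      show "(\<Union>i\<in>{1..n}. A i) \<subseteq> {1..a + p}"
      proof
        fix x assume "x \<in> (\<Union>i\<in>{1..n}. A i)"
        then obtain i where i: "i \<in> {1..n}" "x \<in> A i" by blast
        show "x \<in> {1..a + p}"
        proof (cases "i = n")
          case True then show ?thesis using i memn a1 by auto
        next
          case False
          then have "i \<in> {1..n-1}" using i by auto
          then show ?thesis using i memi[OF False] Bsub[of i x] Bsub[of i "x - a"] a1 by auto
        qed
      qed
    next
      show "{1..a + p} \<subseteq> (\<Union>i\<in>{1..n}. A i)"
      proof
        fix x assume x: "x \<in> {1..a + p}"
        show "x \<in> (\<Union>i\<in>{1..n}. A i)"
        proof (cases "x \<le> p")
          case True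
          then obtain i where "i \<in> {1..n-1}" "x \<in> B i" using Bcov[of x] x by auto
          then show ?thesis using memi[of i x] by (intro UN_I[of i]) auto
        next
          case F1: False
          show ?thesis
          proof (cases "x \<le> 2*p+1")
            case True then show ?thesis using F1 memn n2 by (intro UN_I[of n]) auto
          next
            case False
            then have xa: "1 \<le> x - a" "x - a \<le> p" using x a1 by auto
            obtain i where "i \<in> {1..n-1}" "x - a \<in> B i" using Bcov[OF xa] by blast
            then show ?thesis using memi[of i x] False by (intro UN_I[of i]) auto
          qed
        qed
      qed
    qed
  next
    fix i j assume ij: "i \<in> {1..n}" "j \<in> {1..n}" "i \<noteq> j"
    show "A i \<inter> A j = {}"
    proof (cases "i = n \<or> j = n")
      case True
      then show ?thesis
      proof
        assume "i = n" then show ?thesis using notmid[of j] memn ij by fastforce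
      next
        assume "j = n" then show ?thesis using notmid[of i] memn ij by fastforce
      qed
    next
      case False
      then have ij': "i \<in> {1..n-1}" "j \<in> {1..n-1}" using ij by auto
      show ?thesis
      proof (rule ccontr)
        assume "A i \<inter> A j \<noteq> {}"
        then obtain x where x: "x \<in> A i" "x \<in> A j" by blast
        show False
        proof (cases "x \<le> p")
          case True
          then have "x \<in> B i" "x \<in> B j" using x memi False by auto
          then show False using Bdisj ij' ij by blast
        next
          case F: False
          then have "x \<notin> B i" "x \<notin> B j" using Bsub ij' by force+
          then have "x - a \<in> B i" "x - a \<in> B j" using x memi False by auto
          then show False using Bdisj ij' ij by blast
        qed
      qed
    qed
  qed
  have wsf: "weakly_sum_free (A i)" if i: "i \<in> {1..n}" for i
  proof (cases "i = n")
    case True then show ?thesis using memn unfolding weakly_sum_free_def by auto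
  next
    case False
    then have i': "i \<in> {1..n-1}" using i by auto
    have wB: "weakly_sum_free (B i)" using W i' by auto
    show ?thesis unfolding weakly_sum_free_def
    proof (intro ballI impI notI)
      fix x y assume x: "x \<in> A i" and y: "y \<in> A i" and xy: "x \<noteq> y" and s: "x + y \<in> A i"
      show False
      proof (cases "x \<in> B i")
        case xB: True
        show False
        proof (cases "y \<in> B i")
          case True
          then show False using xB s memi[OF False, of "x+y"] Bsub[OF i', of x] Bsub[OF i', of y] wB xy
            unfolding weakly_sum_free_def by auto
        next
          case yl: False
          then have y2: "2*p+2 \<le> y" "y - a \<in> B i" using y memi[OF False] by auto
          then have "x + y \<notin> B i" using Bsub[OF i', of "x+y"] by auto
          then have s': "x + y - a \<in> B i" using s memi[OF False] by auto
          have "x \<noteq> y - a" using Bsub[OF i', of "x + y - a"] s' y2 a1 by auto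
          moreover have "x + (y - a) = x + y - a" using y2 a1 by auto
          ultimately show False using wB xB y2 s' unfolding weakly_sum_free_def by metis
        qed
      next
        case xl: False
        then have x2: "2*p+2 \<le> x" "x - a \<in> B i" using x memi[OF False] by auto
        show False
        proof (cases "y \<in> B i")
          case yB: True
          then have "x + y \<notin> B i" using Bsub[OF i', of "x+y"] x2 by auto
          then have s': "x + y - a \<in> B i" using s memi[OF False] by auto
          have "y \<noteq> x - a" using Bsub[OF i', of "x + y - a"] s' x2 a1 by auto
          moreover have "y + (x - a) = x + y - a" using x2 a1 by auto
          ultimately show False using wB yB x2 s' unfolding weakly_sum_free_def by metis
        next
          case False
          then have "2*p+2 \<le> y" using y memi[OF \<open>i \<noteq> n\<close>] by auto
          then show False using s memi[OF \<open>i \<noteq> n\<close>, of "x+y"] Bsub[OF i', of "x+y"]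
              Bsub[OF i', of "x+y-a"] x2 a1 by auto
        qed
      qed
    qed
  qed
  have sf: "sum_free (A i - {1..p})" if i: "i \<in> {1..n}" for i
  proof (cases "i = n")
    case True then show ?thesis using memn unfolding sum_free_def by auto
  next
    case False
    then have i': "i \<in> {1..n-1}" using i by auto
    have big: "2*p+2 \<le> x" if "x \<in> A i - {1..p}" for x
      using that memi[OF False, of x] Bsub[OF i', of x] by auto
    show ?thesis unfolding sum_free_def
    proof (intro ballI notI)
      fix x y assume x: "x \<in> A i - {1..p}" and y: "y \<in> A i - {1..p}" and s: "x + y \<in> A i - {1..p}"
      have "x - a \<in> B i" using x memi[OF False] Bsub[OF i', of x] by auto
      then show False using big[OF x] big[OF y] big[OF s] s memi[OF False, of "x+y"]
         Bsub[OF i', of "x+y-a"] Bsub[OF i', of "x+y"] a1 by auto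
    qed
  qed
  have c3: "\<forall>x\<in>A n. \<forall>y\<in>A n. x + y > p + 2 * a \<longrightarrow> x + y - 2 * a \<notin> A n"
    using memn a1 by auto
  have c4: "pi_map a p (x + y) \<notin> A i"
    if i: "i \<in> {1..n-1}" and x: "x \<in> A i" and y: "y \<in> A i" and s: "x + y > a + p" for i x y
  proof -
    have nn: "i \<noteq> n" using i n2 by auto
    have cases_x: "(x \<in> B i \<and> 1 \<le> x \<and> x \<le> p) \<or> (2*p+2 \<le> x \<and> x - a \<in> B i \<and> 1 \<le> x - a \<and> x - a \<le> p)"
      using x memi[OF nn] Bsub[OF i] by blast
    have cases_y: "(y \<in> B i \<and> 1 \<le> y \<and> y \<le> p) \<or> (2*p+2 \<le> y \<and> y - a \<in> B i \<and> 1 \<le> y - a \<and> y - a \<le> p)"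
      using y memi[OF nn] Bsub[OF i] by blast
    obtain t k where t: "x + y = t + k * a" "p < t" "t \<le> 2 * p"
    proof -
      consider "x \<le> p" "y \<le> p" | "x \<le> p" "2*p+2 \<le> y" | "2*p+2 \<le> x" "y \<le> p" | "2*p+2 \<le> x" "2*p+2 \<le> y"
        using cases_x cases_y by linarith
      then show ?thesis
      proof cases
        case 1 then show ?thesis using s a1 by auto
      next
        case 2 then show ?thesis using that[of "x + (y - a)" 1] s a1 cases_y by auto
      next
        case 3 then show ?thesis using that[of "(x - a) + y" 1] s a1 cases_x by auto
      next
        case 4 then show ?thesis using that[of "(x - a) + (y - a)" 2] s a1 cases_x cases_y by auto
      qed
    qed
    have "pi_map a p (x + y) = t" using pi_lemma[OF t(2,3) a1(1)] t(1) by simp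
    then show ?thesis using notmid[OF i, of t] t by auto
  qed
  show ?thesis unfolding WS_template_def
    using p1 a1 n2 part wsf sf c3 c4 by auto
qed



theorem proposition3p16:
  fixes n :: nat
  assumes "n \<ge> 2"
  shows "3 / 2 * real (WS (n - 1)) + 1 \<le> real (WS_plus n)
         \<and> WS_plus n \<le> WS n"
proof
  show "WS_plus n \<le> WS n" by (rule WS_plus_le)
  define p where "p = WS (n - 1)"
  obtain B where P: "is_partition B (n - 1) {1..p}" and W: "\<forall>i\<in>{1..n-1}. weakly_sum_free (B i)"
    using WS_props(1)[of "n - 1"] unfolding p_def WSP_def by blast
  have "WSP (n - 1) 1"
    unfolding WSP_def
  proof (intro exI[of _ "\<lambda>i. if i = 1 then {1} else {}"] conjI)
    show "is_partition (\<lambda>i. if i = 1 then {1} else {}) (n - 1) {1..1}"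
      unfolding is_partition_def using assms by auto
    show "\<forall>i\<in>{1..n - 1}. weakly_sum_free (if i = 1 then {1} else {})"
      unfolding weakly_sum_free_def by auto
  qed
  then have p1: "p \<ge> 1" unfolding p_def by (rule WS_props(2))
  define a where "a = p + 1 + (p + 1) div 2"
  define A where "A = (\<lambda>i. if i = n then {p+1..2*p+1} else B i \<union> {x. 2*p+2 \<le> x \<and> x - a \<in> B i})"
  have T: "WS_template p a n A"
    by (rule construct[OF assms P W p1 a_def A_def])
  have "a \<le> WS_plus n"
    using template_le_plus_b[OF T] plus_b_le_plus[of p n] p1 by simp
  moreover have "3 / 2 * real p + 1 \<le> real a"
  proof -
    have "p \<le> 2 * ((p + 1) div 2)" by auto
    then have "real p \<le> 2 * real ((p + 1) div 2)" by (metis of_nat_le_iff of_nat_mult of_nat_numeral)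
    then show ?thesis unfolding a_def by simp
  qed
  ultimately show "3 / 2 * real (WS (n - 1)) + 1 \<le> real (WS_plus n)"
    unfolding p_def by linarith
qed

end
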